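(* For all integers $f,n\ge0$ with $(f,n)\neq(0,0)$, one has $T_{0,0}(q)=1$ and $$T_{f,n}(q)=T_{f,n-1}(q)+\{n+1\}\,T_{f-1,n+1}(q),$$ where $T_{f,n}(q)$ is interpreted as $0$ if $f$ or $n$ is negative.
   Context: For $f,n\ge0$, a chord diagram with $f$ free chords and $n$ tethered chords is described combinatorially as follows: take $2f+n$ points on a circle labelled $1,2,\dots,2f+n$ in clockwise order starting after a fixed basepoint; choose an $n$-element subset of these points (the endpoints of the tethered chords, each joined by a chord to the basepoint) and a perfect matching of the remaining $2f$ points into $f$ free chords. The number of crossings of such a diagram is the number of pairs of free chords $\{a<b\},\{c<d\}$ with $a<c<b<d$, plus the number of pairs (tethered endpoint $p$, free chord $\{a<b\}$) with $a<p<b$. Let $N(f,n,c)$ be the number of such diagrams with $c$ crossings and $T_{f,n}(q):=\sum_cN(f,n,c)q^c\in\mathbb N[q]$. Also $\{m\}:=1+q+\cdots+q^{m-1}$ is the classical $q$-integer. *)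

theory Defs
  imports "HOL-Computational_Algebra.Polynomial"
begin

definition perfect_matching :: "(nat \<times> nat) set \<Rightarrow> nat set \<Rightarrow> bool" where
  "perfect_matching M P \<longleftrightarrow>
     (\<forall>(a,b)\<in>M. a < b \<and> a \<in> P \<and> b \<in> P) \<and>
     (\<forall>x\<in>P. \<exists>!e. e \<in> M \<and> (x = fst e \<or> x = snd e))"

text \<open>Chord diagrams with f free and n tethered chords: (S, M) with S the tethered endpoints.\<close>
definition chord_diagrams :: "nat \<Rightarrow> nat \<Rightarrow> (nat set \<times> (nat \<times> nat) set) set" where
  "chord_diagrams f n = {(S, M). S \<subseteq> {1..2*f+n} \<and> card S = n \<and>
       perfect_matching M ({1..2*f+n} - S)}"

definition crossings :: "nat set \<times> (nat \<times> nat) set \<Rightarrow> nat" where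
  "crossings D = (case D of (S, M) \<Rightarrow>
      card {(e1, e2). e1 \<in> M \<and> e2 \<in> M \<and> fst e1 < fst e2 \<and> fst e2 < snd e1 \<and> snd e1 < snd e2}
    + card {(p, e). p \<in> S \<and> e \<in> M \<and> fst e < p \<and> p < snd e})"

definition T :: "nat \<Rightarrow> nat \<Rightarrow> nat poly" where
  "T f n = (\<Sum>D\<in>chord_diagrams f n. monom 1 (crossings D))"

definition qint :: "nat \<Rightarrow> nat poly" where
  "qint m = (\<Sum>i<m. monom 1 i)"

end

theory Submission
  imports Defs
begin

lemma pm_edge: "perfect_matching M P \<Longrightarrow> (a,b)\<in>M \<Longrightarrow> a<b \<and> a\<in>P \<and> b\<in>P"
  by (auto simp: perfect_matching_def)

lemma pm_uniq:
  assumes "perfect_matching M P" "e\<in>M" "e'\<in>M" "x = fst e \<or> x = snd e" "x = fst e' \<or> x = snd e'"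
  shows "e = e'"
proof -
  have "x \<in> P" using assms(1,2,4) pm_edge[of M P "fst e" "snd e"] by auto
  then have "\<exists>!e. e \<in> M \<and> (x = fst e \<or> x = snd e)" using assms(1) by (auto simp: perfect_matching_def)
  then show ?thesis using assms(2-5) by blast
qed

lemma pm_cover:
  assumes "perfect_matching M P" "x \<in> P"
  shows "\<exists>e\<in>M. x = fst e \<or> x = snd e"
proof -
  have "\<exists>!e. e \<in> M \<and> (x = fst e \<or> x = snd e)" using assms unfolding perfect_matching_def by blast
  then show ?thesis by blast
qed

lemma pm_sub: "perfect_matching M P \<Longrightarrow> M \<subseteq> P \<times> P"
  by (auto simp: perfect_matching_def)

lemma pm_remove:
  assumes pm: "perfect_matching M P" and ab: "(a,b)\<in>M"
  shows "perfect_matching (M - {(a,b)}) (P - {a,b})"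
  unfolding perfect_matching_def
proof (intro conjI ballI)
  fix e assume e: "e \<in> M - {(a,b)}"
  obtain c d where cd: "e = (c,d)" by (cases e)
  have eM: "e \<in> M" and ne: "e \<noteq> (a,b)" using e by auto
  have "c<d \<and> c\<in>P \<and> d\<in>P" using pm_edge[OF pm] eM cd by auto
  moreover have "c \<noteq> a"
  proof
    assume "c = a"
    then have "e = (a,b)" by (intro pm_uniq[OF pm eM ab, of a]) (simp_all add: cd)
    with ne show False by simp
  qed
  moreover have "c \<noteq> b"
  proof
    assume "c = b"
    then have "e = (a,b)" by (intro pm_uniq[OF pm eM ab, of b]) (simp_all add: cd)
    with ne show False by simp
  qed
  moreover have "d \<noteq> a"
  proof
    assume "d = a"
    then have "e = (a,b)" by (intro pm_uniq[OF pm eM ab, of a]) (simp_all add: cd)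
    with ne show False by simp
  qed
  moreover have "d \<noteq> b"
  proof
    assume "d = b"
    then have "e = (a,b)" by (intro pm_uniq[OF pm eM ab, of b]) (simp_all add: cd)
    with ne show False by simp
  qed
  ultimately show "case e of (c,d) \<Rightarrow> c<d \<and> c \<in> P - {a,b} \<and> d \<in> P - {a,b}" unfolding cd by simp
next
  fix x assume x: "x \<in> P - {a,b}"
  then obtain e where e: "e \<in> M" "x = fst e \<or> x = snd e" using pm_cover[OF pm, of x] by blast
  have ne: "e \<noteq> (a,b)" using e x by auto
  show "\<exists>!e. e \<in> M - {(a,b)} \<and> (x = fst e \<or> x = snd e)"
  proof (rule ex1I[of _ e])
    show "e \<in> M - {(a,b)} \<and> (x = fst e \<or> x = snd e)" using e ne by simp
  next
    fix e' assume "e' \<in> M - {(a,b)} \<and> (x = fst e' \<or> x = snd e')"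
    then show "e' = e" using pm_uniq[OF pm, of e' e x] e by blast
  qed
qed

lemma pm_add:
  assumes pm: "perfect_matching M P" and "a<b" "a\<notin>P" "b\<notin>P"
  shows "perfect_matching (insert (a,b) M) (insert a (insert b P))"
  unfolding perfect_matching_def
proof (intro conjI ballI)
  fix e assume e: "e \<in> insert (a,b) M"
  then show "case e of (c,d) \<Rightarrow> c<d \<and> c \<in> insert a (insert b P) \<and> d \<in> insert a (insert b P)"
    using pm_edge[OF pm] assms(2) by auto
next
  fix x assume x: "x \<in> insert a (insert b P)"
  show "\<exists>!e. e \<in> insert (a,b) M \<and> (x = fst e \<or> x = snd e)"
  proof (cases "x \<in> P")
    case True
    then obtain e where e: "e \<in> M" "x = fst e \<or> x = snd e" using pm_cover[OF pm, of x] by blast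
    have xa: "x \<noteq> a" "x \<noteq> b" using True assms by auto
    show ?thesis
    proof (rule ex1I[of _ e])
      show "e \<in> insert (a,b) M \<and> (x = fst e \<or> x = snd e)" using e by simp
    next
      fix e' assume h: "e' \<in> insert (a,b) M \<and> (x = fst e' \<or> x = snd e')"
      then have e'M: "e' \<in> M" using xa by auto
      show "e' = e" using pm_uniq[OF pm e'M e(1), of x] h e(2) by blast
    qed
  next
    case False
    have nc: "\<not> (x = fst e \<or> x = snd e)" if "e \<in> M" for e
      using that pm_edge[OF pm, of "fst e" "snd e"] False by auto
    show ?thesis using x False nc by (intro ex1I[of _ "(a,b)"]) auto
  qed
qed

lemma finite_pm: "finite P \<Longrightarrow> perfect_matching M P \<Longrightarrow> finite M"
  using pm_sub finite_subset by blast

lemma finite_cd: "finite (chord_diagrams f n)"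
proof -
  let ?I = "{1..2*f+n}"
  have "chord_diagrams f n \<subseteq> Pow ?I \<times> Pow (?I \<times> ?I)"
    unfolding chord_diagrams_def using pm_sub by fastforce
  then show ?thesis by (rule finite_subset) auto
qed

lemma qint_Suc: "qint (Suc k) = qint k + monom 1 k"
  by (simp add: qint_def)

lemma qint_sum: "finite (S::nat set) \<Longrightarrow> (\<Sum>a\<in>S. (monom 1 (card {p\<in>S. a<p}) :: nat poly)) = qint (card S)"
proof (induction "card S" arbitrary: S)
  case 0
  then show ?case by (simp add: qint_def)
next
  case (Suc k)
  then have ne: "S \<noteq> {}" by auto
  define m where "m = Min S"
  have mS: "m \<in> S" using Min_in[OF Suc.prems ne] m_def by simp
  define S0 where "S0 = S - {m}"
  have cS0: "card S0 = k" using Suc.hyps(2) mS S0_def Suc.prems by simp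
  have fS0: "finite S0" using Suc.prems S0_def by simp
  have e1: "{p\<in>S. m<p} = S0" using Min_le[OF Suc.prems] m_def S0_def by force
  have e2: "{p\<in>S. a<p} = {p\<in>S0. a<p}" if "a \<in> S0" for a
    using that Min_le[OF Suc.prems] m_def S0_def by force
  have "(\<Sum>a\<in>S. (monom 1 (card {p\<in>S. a<p}) :: nat poly)) =
        monom 1 (card {p\<in>S. m<p}) + (\<Sum>a\<in>S0. monom 1 (card {p\<in>S. a<p}))"
    using sum.remove[OF Suc.prems mS] S0_def by simp
  also have "\<dots> = monom 1 k + (\<Sum>a\<in>S0. monom 1 (card {p\<in>S0. a<p}))"
    using e1 e2 cS0 by simp
  also have "\<dots> = monom 1 k + qint k" using Suc.hyps(1)[of S0] cS0 fS0 by simp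
  finally show ?case by (metis Suc.hyps(2) qint_Suc add.commute)
qed


lemma cross_A:
  assumes pm: "perfect_matching M ({1..N} - S)"
  shows "crossings (S - {N}, M) = crossings (S, M)"
proof -
  have "{(p, e). p \<in> S - {N} \<and> e \<in> M \<and> fst e < p \<and> p < snd e} =
        {(p, e). p \<in> S \<and> e \<in> M \<and> fst e < p \<and> p < snd e}"
    using pm_edge[OF pm] by force
  then show ?thesis unfolding crossings_def by simp
qed

lemma cross_B:
  assumes pm: "perfect_matching M ({1..N} - S)" and SN: "S \<subseteq> {1..N}" "N \<notin> S"
    and aN: "(a,N) \<in> M"
  shows "crossings (S, M) = crossings (insert a S, M - {(a,N)}) + card {p\<in>S. a<p}"
proof -
  let ?M' = "M - {(a,N)}"
  define X where "X = (\<lambda>M::(nat\<times>nat) set. {(e1, e2). e1 \<in> M \<and> e2 \<in> M \<and> fst e1 < fst e2 \<and> fst e2 < snd e1 \<and> snd e1 < snd e2})"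
  define Y where "Y = (\<lambda>(S::nat set) (M::(nat\<times>nat) set). {(p, e). p \<in> S \<and> e \<in> M \<and> fst e < p \<and> p < snd e})"
  have cr: "crossings (S', M') = card (X M') + card (Y S' M')" for S' M'
    unfolding crossings_def X_def Y_def by simp
  have fM: "finite M" using finite_pm[OF _ pm] by simp
  have fS: "finite S" using SN finite_subset by blast
  have aP: "a \<in> {1..N} - S" and aN': "a < N" using pm_edge[OF pm aN] by auto
  have sndle: "snd e \<le> N" if "e \<in> M" for e using pm_edge[OF pm, of "fst e" "snd e"] that by auto
  have sndN: "snd e < N" if "e \<in> ?M'" for e
  proof -
    have "snd e \<noteq> N" using pm_uniq[OF pm, of e "(a,N)" N] that aN by auto
    moreover have "snd e \<le> N" using sndle that by blast
    ultimately show ?thesis by simp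
  qed
  define E where "E = {e\<in>?M'. fst e < a \<and> a < snd e}"
  have X1: "X M = X ?M' \<union> (\<lambda>e. (e,(a,N))) ` E"
    unfolding X_def E_def using aN
    by (auto; metis leD le_neq_implies_less snd_conv fst_conv sndle sndN Diff_iff singletonD less_irrefl)
  have X2: "X ?M' \<inter> (\<lambda>e. (e,(a,N))) ` E = {}" unfolding X_def E_def by auto
  have Y1: "Y S M = Y S ?M' \<union> (\<lambda>p. (p,(a,N))) ` {p\<in>S. a<p}"
  proof -
    have SltN: "p < N" if "p \<in> S" for p using SN that
      by (metis atLeastAtMost_iff le_neq_implies_less subsetD)
    show ?thesis unfolding Y_def using aN SltN by (auto simp: image_iff)
  qed
  have Y2: "Y S ?M' \<inter> (\<lambda>p. (p,(a,N))) ` {p\<in>S. a<p} = {}" unfolding Y_def by auto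
  have Y3: "Y (insert a S) ?M' = Y S ?M' \<union> (\<lambda>e. (a,e)) ` E"
    unfolding Y_def E_def by auto
  have Y4: "Y S ?M' \<inter> (\<lambda>e. (a,e)) ` E = {}" unfolding Y_def using aP by auto
  have fX: "finite (X M')" if "finite M'" for M'
    unfolding X_def by (rule finite_subset[of _ "M' \<times> M'"]) (use that in auto)
  have fY: "finite (Y S' M')" if "finite S'" "finite M'" for S' M'
    unfolding Y_def by (rule finite_subset[of _ "S' \<times> M'"]) (use that in auto)
  have fE: "finite E" unfolding E_def using fM by simp
  have fM': "finite ?M'" using fM by simp
  have i1: "card ((\<lambda>e. (e,(a,N))) ` E) = card E" by (rule card_image) (auto simp: inj_on_def)
  have i2: "card ((\<lambda>p. (p,(a,N))) ` {p\<in>S. a<p}) = card {p\<in>S. a<p}" by (rule card_image) (auto simp: inj_on_def)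
  have i3: "card ((\<lambda>e. (a,e)) ` E) = card E" by (rule card_image) (auto simp: inj_on_def)
  have e1: "card (X M) = card (X ?M') + card E"
    unfolding X1 i1[symmetric] by (rule card_Un_disjoint[OF fX[OF fM'] finite_imageI[OF fE] X2])
  have e2: "card (Y S M) = card (Y S ?M') + card {p\<in>S. a<p}"
    unfolding Y1 i2[symmetric] by (rule card_Un_disjoint[OF fY[OF fS fM'] finite_imageI Y2]) (use fS in simp)
  have e3: "card (Y (insert a S) ?M') = card (Y S ?M') + card E"
    unfolding Y3 i3[symmetric] by (rule card_Un_disjoint[OF fY[OF fS fM'] finite_imageI[OF fE] Y4])
  show ?thesis unfolding cr e1 e2 e3 by (simp only: ac_simps)
qed


lemma sumA:
  "(\<Sum>D\<in>{D\<in>chord_diagrams f (Suc m). 2*f + Suc m \<in> fst D}. monom 1 (crossings D)) = T f m"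
proof -
  define N where "N = Suc (2*f+m)"
  define A where "A = {D\<in>chord_diagrams f (Suc m). 2*f + Suc m \<in> fst D}"
  define B where "B = chord_diagrams f m"
  define i where "i = (\<lambda>(S::nat set, M::(nat\<times>nat) set). (insert N S, M))"
  define j where "j = (\<lambda>(S::nat set, M::(nat\<times>nat) set). (S - {N}, M))"
  have memA: "S \<subseteq> {1..N} \<and> card S = Suc m \<and> perfect_matching M ({1..N} - S) \<and> N \<in> S"
    if "(S,M) \<in> A" for S M using that by (simp add: A_def chord_diagrams_def N_def)
  have memB: "S \<subseteq> {1..2*f+m} \<and> card S = m \<and> perfect_matching M ({1..2*f+m} - S)"
    if "(S,M) \<in> B" for S M using that by (simp add: B_def chord_diagrams_def)
  have w1: "i (j D) = D" if "D \<in> A" for D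
  proof -
    obtain S M where SM: "D = (S,M)" by (cases D)
    then show ?thesis using memA[of S M] that by (auto simp: i_def j_def)
  qed
  have w2: "j D \<in> B" if "D \<in> A" for D
  proof -
    obtain S M where SM: "D = (S,M)" by (cases D)
    have S: "S \<subseteq> {1..N}" "card S = Suc m" "perfect_matching M ({1..N} - S)" "N \<in> S"
      using memA[of S M] that SM by auto
    have fS: "finite S" using S(1) finite_subset by blast
    have e: "{1..2*f+m} - (S - {N}) = {1..N} - S" using S(4) by (auto simp: N_def le_Suc_eq)
    have "S - {N} \<subseteq> {1..2*f+m}" using S(1) by (auto simp: N_def)
    moreover have "card (S - {N}) = m" using S(2,4) fS by simp
    ultimately show ?thesis using S(3) SM e by (simp add: j_def B_def chord_diagrams_def)
  qed
  have w3: "j (i D) = D" if "D \<in> B" for D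
  proof -
    obtain S M where SM: "D = (S,M)" by (cases D)
    have "N \<notin> S" using memB[of S M] that SM by (auto simp: N_def)
    then show ?thesis using SM by (auto simp: i_def j_def)
  qed
  have w4: "i D \<in> A" if "D \<in> B" for D
  proof -
    obtain S M where SM: "D = (S,M)" by (cases D)
    have S: "S \<subseteq> {1..2*f+m}" "card S = m" "perfect_matching M ({1..2*f+m} - S)"
      using memB[of S M] that SM by auto
    have fS: "finite S" using S(1) finite_subset by blast
    have NS: "N \<notin> S" using S(1) by (auto simp: N_def)
    have e: "{1..2*f + Suc m} - insert N S = {1..2*f+m} - S" by (auto simp: N_def)
    have "insert N S \<subseteq> {1..2*f + Suc m}" using S(1) by (auto simp: N_def)
    moreover have "card (insert N S) = Suc m" using S(2) fS NS by simp
    moreover have "2*f + Suc m = N" by (simp add: N_def)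
    ultimately show ?thesis using S(3) SM e by (simp add: i_def A_def chord_diagrams_def)
  qed
  have w5: "monom 1 (crossings (j D)) = (monom 1 (crossings D) :: nat poly)" if "D \<in> A" for D
  proof -
    obtain S M where SM: "D = (S,M)" by (cases D)
    have "perfect_matching M ({1..N} - S)" using memA[of S M] that SM by auto
    then show ?thesis using cross_A SM by (simp add: j_def)
  qed
  have "(\<Sum>D\<in>A. monom 1 (crossings D)) = (\<Sum>D\<in>B. (monom 1 (crossings D) :: nat poly))"
    by (rule sum.reindex_bij_witness[of A i j B]) (fact w1 w2 w3 w4 w5)+
  then show ?thesis unfolding A_def B_def T_def .
qed


lemma partner_N:
  assumes pm: "perfect_matching M ({1..N} - S)" and SN: "N \<notin> S" and N1: "1 \<le> N"
  obtains a where "(a,N) \<in> M"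
proof -
  have "N \<in> {1..N} - S" using SN N1 by auto
  then obtain e where e: "e \<in> M" "N = fst e \<or> N = snd e" using pm_cover[OF pm] by blast
  obtain c d where cd: "e = (c,d)" by (cases e)
  have "c < d" "d \<in> {1..N} - S" using pm_edge[OF pm, of c d] e cd by auto
  then have "d = N" using e cd by auto
  then show ?thesis using that e cd by blast
qed

lemma partner_the:
  assumes pm: "perfect_matching M P" and "(a,N) \<in> M"
  shows "(THE a. (a,N) \<in> M) = a"
proof (rule the_equality)
  show "(a,N) \<in> M" by fact
next
  fix a' assume "(a',N) \<in> M"
  then have "(a',N) = (a,N)" using pm_uniq[OF pm _ assms(2), of "(a',N)" N] by simp
  then show "a' = a" by simp
qed

lemma monom_add1: "(monom 1 (c + k) :: nat poly) = monom 1 c * monom 1 k"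
  by (simp add: mult_monom)

lemma sumB:
  "(\<Sum>D\<in>{D\<in>chord_diagrams (Suc g) n. 2*Suc g + n \<notin> fst D}. monom 1 (crossings D))
     = qint (Suc n) * T g (Suc n)"
proof -
  define K where "K = 2*g + Suc n"
  define N where "N = Suc K"
  have NN: "2*Suc g + n = N" by (simp add: N_def K_def)
  define A where "A = {D\<in>chord_diagrams (Suc g) n. 2*Suc g + n \<notin> fst D}"
  define C where "C = chord_diagrams g (Suc n)"
  define B where "B = Sigma C fst"
  define pt where "pt = (\<lambda>M::(nat\<times>nat) set. THE a. (a,N) \<in> M)"
  define i where "i = (\<lambda>((S::nat set, M::(nat\<times>nat) set), a::nat). (S - {a}, insert (a,N) M))"
  define j where "j = (\<lambda>(S::nat set, M::(nat\<times>nat) set). ((insert (pt M) S, M - {(pt M, N)}), pt M))"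
  define h where "h = (\<lambda>(D::nat set \<times> (nat\<times>nat) set, a::nat). (monom 1 (crossings D + card {p\<in>fst D. a<p}) :: nat poly))"
  have memA: "S \<subseteq> {1..N} \<and> card S = n \<and> perfect_matching M ({1..N} - S) \<and> N \<notin> S"
    if "(S,M) \<in> A" for S M using that by (simp add: A_def chord_diagrams_def N_def K_def)
  have memC: "S \<subseteq> {1..K} \<and> card S = Suc n \<and> perfect_matching M ({1..K} - S)"
    if "(S,M) \<in> C" for S M using that by (simp add: C_def chord_diagrams_def K_def)
  have Aelim: "\<exists>a. pt M = a \<and> (a,N) \<in> M \<and> a \<notin> S \<and> 1 \<le> a \<and> a < N"
    if "(S,M) \<in> A" for S M
  proof -
    have S: "S \<subseteq> {1..N}" "card S = n" "perfect_matching M ({1..N} - S)" "N \<notin> S"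
      using memA[OF that] by auto
    obtain a where a: "(a,N) \<in> M" using partner_N[OF S(3) S(4)] by (auto simp: N_def)
    have "pt M = a" unfolding pt_def using partner_the[OF S(3) a] .
    moreover have "a < N \<and> a \<in> {1..N} - S" using pm_edge[OF S(3) a] by auto
    ultimately show ?thesis using a by auto
  qed
  have w1: "i (j D) = D" if "D \<in> A" for D
  proof -
    obtain S M where SM: "D = (S,M)" by (cases D)
    obtain a where a: "pt M = a" "(a,N) \<in> M" "a \<notin> S" using Aelim[of S M] \<open>D \<in> A\<close> SM by auto
    show ?thesis using SM a by (auto simp: i_def j_def)
  qed
  have w2: "j D \<in> B" if "D \<in> A" for D
  proof -
    obtain S M where SM: "D = (S,M)" by (cases D)
    have S: "S \<subseteq> {1..N}" "card S = n" "perfect_matching M ({1..N} - S)" "N \<notin> S"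
      using memA[of S M] that SM by auto
    obtain a where a: "pt M = a" "(a,N) \<in> M" "a \<notin> S" "1 \<le> a" "a < N" using Aelim[of S M] \<open>D \<in> A\<close> SM by auto
    have fS: "finite S" using S(1) finite_subset by blast
    have e: "{1..K} - insert a S = ({1..N} - S) - {a, N}" by (auto simp: N_def)
    have "insert a S \<subseteq> {1..K}" using S(1,4) a(4,5) by (auto simp: N_def le_Suc_eq)
    moreover have "card (insert a S) = Suc n" using S(2) fS a(3) by simp
    moreover have "perfect_matching (M - {(a,N)}) ({1..K} - insert a S)"
      unfolding e by (rule pm_remove[OF S(3) a(2)])
    ultimately show ?thesis using SM a(1)
      by (simp add: j_def B_def C_def chord_diagrams_def K_def)
  qed
  have w3: "j (i b) = b" if "b \<in> B" for b
  proof -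
    obtain S M a where SM: "b = ((S,M),a)" by (metis prod.collapse)
    have S: "S \<subseteq> {1..K}" "card S = Suc n" "perfect_matching M ({1..K} - S)" "a \<in> S"
      using memC[of S M] that SM by (auto simp: B_def)
    have nM: "(a',N) \<notin> M" for a'
      using pm_edge[OF S(3), of a' N] by (auto simp: N_def)
    have "pt (insert (a,N) M) = a" unfolding pt_def
      by (rule the_equality) (use nM in auto)
    then show ?thesis using SM S(4) nM by (auto simp: i_def j_def)
  qed
  have w4: "i b \<in> A" if "b \<in> B" for b
  proof -
    obtain S M a where SM: "b = ((S,M),a)" by (metis prod.collapse)
    have S: "S \<subseteq> {1..K}" "card S = Suc n" "perfect_matching M ({1..K} - S)" "a \<in> S"
      using memC[of S M] that SM by (auto simp: B_def)
    have fS: "finite S" using S(1) finite_subset by blast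
    have a1: "1 \<le> a" "a \<le> K" using S(1,4) by auto
    have e: "{1..N} - (S - {a}) = insert a (insert N ({1..K} - S))"
      using S(1,4) a1 by (auto simp: N_def le_Suc_eq)
    have pm: "perfect_matching (insert (a,N) M) ({1..N} - (S - {a}))"
      unfolding e by (rule pm_add[OF S(3)]) (use a1 S(4) in \<open>auto simp: N_def\<close>)
    have "S - {a} \<subseteq> {1..N}" using S(1) by (auto simp: N_def)
    moreover have "card (S - {a}) = n" using S(2,4) fS by simp
    moreover have "N \<notin> S - {a}" using S(1) by (auto simp: N_def)
    ultimately show ?thesis using SM pm
      by (simp add: i_def A_def chord_diagrams_def N_def K_def)
  qed
  have w5: "h (j D) = monom 1 (crossings D)" if "D \<in> A" for D
  proof -
    obtain S M where SM: "D = (S,M)" by (cases D)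
    have S: "S \<subseteq> {1..N}" "card S = n" "perfect_matching M ({1..N} - S)" "N \<notin> S"
      using memA[of S M] that SM by auto
    obtain a where a: "pt M = a" "(a,N) \<in> M" "a \<notin> S" using Aelim[of S M] \<open>D \<in> A\<close> SM by auto
    have c: "crossings (S, M) = crossings (insert a S, M - {(a,N)}) + card {p\<in>S. a<p}"
      by (rule cross_B[OF S(3) S(1) S(4) a(2)])
    have "{p \<in> insert a S. a < p} = {p\<in>S. a<p}" by auto
    then show ?thesis using SM a(1) c by (simp add: h_def j_def)
  qed
  have fC: "finite C" unfolding C_def by (rule finite_cd)
  have fS: "\<forall>D\<in>C. finite (fst D)"
  proof
    fix D assume "D \<in> C"
    then have "fst D \<subseteq> {1..K}" using memC[of "fst D" "snd D"] by simp
    then show "finite (fst D)" using finite_subset by blast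
  qed
  have "(\<Sum>D\<in>A. monom 1 (crossings D)) = (\<Sum>b\<in>B. h b)"
    by (rule sum.reindex_bij_witness[of A i j B]) (fact w1 w2 w3 w4 w5)+
  also have "\<dots> = (\<Sum>D\<in>C. \<Sum>a\<in>fst D. (monom 1 (crossings D + card {p\<in>fst D. a<p}) :: nat poly))"
    unfolding B_def h_def by (rule sum.Sigma[OF fC fS, symmetric])
  also have "\<dots> = (\<Sum>D\<in>C. monom 1 (crossings D) * qint (Suc n))"
  proof (rule sum.cong[OF refl])
    fix D assume D: "D \<in> C"
    have "card (fst D) = Suc n" using memC[of "fst D" "snd D"] D by simp
    then show "(\<Sum>a\<in>fst D. (monom 1 (crossings D + card {p\<in>fst D. a<p}) :: nat poly)) =
               monom 1 (crossings D) * qint (Suc n)"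
    proof -
      have "(\<Sum>a\<in>fst D. (monom 1 (crossings D + card {p\<in>fst D. a<p}) :: nat poly)) =
            (\<Sum>a\<in>fst D. monom 1 (crossings D) * monom 1 (card {p\<in>fst D. a<p}))"
        by (simp only: monom_add1)
      also have "\<dots> = monom 1 (crossings D) * (\<Sum>a\<in>fst D. monom 1 (card {p\<in>fst D. a<p}))"
        by (rule sum_distrib_left[symmetric])
      also have "\<dots> = monom 1 (crossings D) * qint (Suc n)"
        using qint_sum[of "fst D"] fS D \<open>card (fst D) = Suc n\<close> by simp
      finally show ?thesis .
    qed
  qed
  also have "\<dots> = qint (Suc n) * T g (Suc n)"
    by (simp add: T_def C_def sum_distrib_left sum_distrib_right mult.commute)
  finally show ?thesis unfolding A_def .
qed


lemma cd00: "chord_diagrams 0 0 = {({}, {})}"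
proof -
  have "perfect_matching {} {}" by (simp add: perfect_matching_def)
  moreover have "M = {}" if "perfect_matching M {}" for M using pm_sub[OF that] by auto
  ultimately show ?thesis by (auto simp: chord_diagrams_def)
qed

lemma T00: "T 0 0 = 1"
  by (simp add: T_def cd00 crossings_def one_pCons monom_0)

lemma split_sum:
  "T f n = (\<Sum>D\<in>{D\<in>chord_diagrams f n. 2*f+n \<in> fst D}. monom 1 (crossings D))
         + (\<Sum>D\<in>{D\<in>chord_diagrams f n. 2*f+n \<notin> fst D}. monom 1 (crossings D))"
proof -
  have "chord_diagrams f n = {D\<in>chord_diagrams f n. 2*f+n \<in> fst D} \<union> {D\<in>chord_diagrams f n. 2*f+n \<notin> fst D}"
    by auto
  moreover have "finite {D\<in>chord_diagrams f n. 2*f+n \<in> fst D}" "finite {D\<in>chord_diagrams f n. 2*f+n \<notin> fst D}"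
    using finite_cd by auto
  ultimately show ?thesis unfolding T_def
    by (metis (no_types, lifting) sum.union_disjoint disjoint_iff mem_Collect_eq)
qed

lemma A_empty: "{D\<in>chord_diagrams f 0. 2*f \<in> fst D} = {}"
proof -
  have "S = {}" if "(S,M) \<in> chord_diagrams f 0" for S M
  proof -
    have "S \<subseteq> {1..2*f}" "card S = 0" using that by (auto simp: chord_diagrams_def)
    then show ?thesis using finite_subset by (metis card_0_eq finite_atLeastAtMost)
  qed
  then show ?thesis by fastforce
qed

lemma B_empty: "1 \<le> n \<Longrightarrow> {D\<in>chord_diagrams 0 n. 2*0+n \<notin> fst D} = {}"
proof -
  assume n: "1 \<le> n"
  have "n \<in> S" if "(S,M) \<in> chord_diagrams 0 n" for S M
  proof -
    have "S \<subseteq> {1..n}" "card S = n" using that by (auto simp: chord_diagrams_def)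
    then have "S = {1..n}" by (metis card_atLeastAtMost card_subset_eq diff_Suc_1 finite_atLeastAtMost)
    then show ?thesis using n by simp
  qed
  then show ?thesis by fastforce
qed

theorem lemma2p4:
  shows "T 0 0 = 1 \<and>
    (\<forall>f n. (f, n) \<noteq> (0, 0) \<longrightarrow>
       T f n = (if n \<ge> 1 then T f (n - 1) else 0)
             + (if f \<ge> 1 then qint (n + 1) * T (f - 1) (n + 1) else 0))"
proof (intro conjI allI impI)
  show "T 0 0 = 1" by (rule T00)
next
  fix f n :: nat assume fn: "(f, n) \<noteq> (0, 0)"
  have a: "(\<Sum>D\<in>{D\<in>chord_diagrams f n. 2*f+n \<in> fst D}. monom 1 (crossings D)) =
           (if n \<ge> 1 then T f (n - 1) else 0)"
  proof (cases n)
    case 0 then show ?thesis unfolding 0 add_0_right A_empty by simp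
  next
    case (Suc m) then show ?thesis using sumA[of f m] by simp
  qed
  have b: "(\<Sum>D\<in>{D\<in>chord_diagrams f n. 2*f+n \<notin> fst D}. monom 1 (crossings D)) =
           (if f \<ge> 1 then qint (n + 1) * T (f - 1) (n + 1) else 0)"
  proof (cases f)
    case 0
    then have "1 \<le> n" using fn by simp
    then show ?thesis unfolding 0 B_empty[OF \<open>1 \<le> n\<close>] by simp
  next
    case (Suc g) then show ?thesis using sumB[of g n] by simp
  qed
  show "T f n = (if n \<ge> 1 then T f (n - 1) else 0)
             + (if f \<ge> 1 then qint (n + 1) * T (f - 1) (n + 1) else 0)"
    using split_sum[of f n] a b by simp
qed

end
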